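(* Let $G\subset\mathbb{R}^n$ be a compact set of positive Lebesgue measure with empty interior, and let $w_G(x)=1$ for $x\in G$ and $w_G(x)=2$ for $x\in\mathbb{R}^n\setminus G$. Then the Banach function space $L^\infty(\mathbb{R}^n,w_G)$ does not satisfy the bounded $L^2$-approximation property.
   Context: $L^\infty(\mathbb{R}^n,w)$ is the space of measurable $f$ with $\|f\|_{L^\infty(\mathbb{R}^n,w)}:=\|fw\|_{L^\infty(\mathbb{R}^n)}<\infty$. A Banach function space $X$ of functions on $\mathbb{R}^n$ has the bounded $L^2$-approximation property if for every $u\in L^2(\mathbb{R}^n)\cap X$ there is a sequence $u_j\in C_0^\infty(\mathbb{R}^n)$ with $\|u-u_j\|_{L^2(\mathbb{R}^n)}\to0$ and $\limsup_j\|u_j\|_X\le\|u\|_X$. *)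

theory Defs
  imports "HOL-Analysis.Analysis" "HOL-Probability.Essential_Supremum"
begin

text \<open>Infinitely (Frechet) differentiable real-valued functions on a Euclidean space:
  f is differentiable everywhere and every directional derivative is again smooth.\<close>
coinductive smooth_fun :: "('a::euclidean_space \<Rightarrow> real) \<Rightarrow> bool" where
  "(\<forall>x. f differentiable (at x)) \<Longrightarrow>
   (\<forall>v. smooth_fun (\<lambda>x. frechet_derivative f (at x) v)) \<Longrightarrow> smooth_fun f"

definition C0_infty :: "('a::euclidean_space \<Rightarrow> real) set" where
  "C0_infty = {f. smooth_fun f \<and> compact (closure {x. f x \<noteq> 0})}"

text \<open>L^2 membership and L^2 norm (used only for functions in L^2, where the integral is finite).\<close>
definition L2_space :: "('a::euclidean_space \<Rightarrow> real) set" where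
  "L2_space = {f. f \<in> borel_measurable lebesgue \<and>
                  (\<integral>\<^sup>+ x. ennreal ((f x)\<^sup>2) \<partial>lebesgue) < \<infinity>}"

definition L2_norm :: "('a::euclidean_space \<Rightarrow> real) \<Rightarrow> real" where
  "L2_norm f = sqrt (enn2real (\<integral>\<^sup>+ x. ennreal ((f x)\<^sup>2) \<partial>lebesgue))"

definition Linf_w_norm :: "('a::euclidean_space \<Rightarrow> real) \<Rightarrow> ('a \<Rightarrow> real) \<Rightarrow> ereal" where
  "Linf_w_norm w f = esssup lebesgue (\<lambda>x. ereal \<bar>f x * w x\<bar>)"

definition Linf_w :: "('a::euclidean_space \<Rightarrow> real) \<Rightarrow> ('a \<Rightarrow> real) set" where
  "Linf_w w = {f. f \<in> borel_measurable lebesgue \<and> Linf_w_norm w f < \<infinity>}"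

definition bounded_L2_approx ::
  "('a::euclidean_space \<Rightarrow> real) set \<Rightarrow> (('a \<Rightarrow> real) \<Rightarrow> ereal) \<Rightarrow> bool" where
  "bounded_L2_approx X nX \<longleftrightarrow>
     (\<forall>u \<in> L2_space \<inter> X. \<exists>uj :: nat \<Rightarrow> 'a \<Rightarrow> real.
        (\<forall>j. uj j \<in> C0_infty) \<and>
        ((\<lambda>j. L2_norm (\<lambda>x. u x - uj j x)) \<longlonglongrightarrow> 0) \<and>
        limsup (\<lambda>j. nX (uj j)) \<le> nX u)"

end

theory Submission imports Defs begin

lemma ball_pos_leb: "r > 0 \<Longrightarrow> emeasure lebesgue (ball (c::'a::euclidean_space) r) > 0"
proof -
  assume r: "r > 0"
  have "measure lborel (ball c r) > 0" using content_ball_pos[OF r] by simp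
  moreover have f: "emeasure lborel (ball c r) \<noteq> top"
    using emeasure_lborel_ball_finite[of c r] by (simp add: less_top)
  ultimately have "emeasure lborel (ball c r) > 0"
    by (simp add: emeasure_eq_ennreal_measure[OF f])
  then show ?thesis by simp
qed

lemma ae_open_bound:
  fixes f :: "'a::euclidean_space \<Rightarrow> real"
  assumes "open S" "continuous_on UNIV f" "AE x in lebesgue. x \<in> S \<longrightarrow> \<bar>f x\<bar> < b" "x \<in> S"
  shows "\<bar>f x\<bar> \<le> b"
proof (rule ccontr)
  assume "\<not> \<bar>f x\<bar> \<le> b"
  define T where "T = S \<inter> {y. b < \<bar>f y\<bar>}"
  have "open {y. b < \<bar>f y\<bar>}"
    using assms(2) by (intro open_Collect_less continuous_intros) auto
  then have "open T" using assms(1) by (auto simp: T_def)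
  moreover have "x \<in> T" using \<open>\<not> \<bar>f x\<bar> \<le> b\<close> assms(4) by (auto simp: T_def)
  ultimately obtain r where r: "r > 0" "ball x r \<subseteq> T" by (meson openE)
  from assms(3) obtain N where N: "{y \<in> space lebesgue. \<not> (y \<in> S \<longrightarrow> \<bar>f y\<bar> < b)} \<subseteq> N"
    "emeasure lebesgue N = 0" "N \<in> sets lebesgue" by (auto elim!: AE_E)
  have "ball x r \<subseteq> N"
  proof
    fix y assume "y \<in> ball x r"
    then have "y \<in> S" "b < \<bar>f y\<bar>" using r(2) by (auto simp: T_def)
    then show "y \<in> N" using N(1) by auto
  qed
  then have "emeasure lebesgue (ball x r) \<le> emeasure lebesgue N" by (intro emeasure_mono N(3))
  then show False using ball_pos_leb[OF r(1), of x] N(2) by simp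
qed

lemma smooth_cont: "smooth_fun f \<Longrightarrow> continuous_on UNIV f"
  by (erule smooth_fun.cases) (auto intro!: continuous_at_imp_continuous_on differentiable_imp_continuous_within)

theorem theorem2p6:
  fixes G :: "'a::euclidean_space set" and wG :: "'a \<Rightarrow> real"
  assumes "compact G"
    and "emeasure lebesgue G > 0"
    and "interior G = {}"
    and "\<And>x. wG x = (if x \<in> G then 1 else 2)"
  shows "\<not> bounded_L2_approx (Linf_w wG) (Linf_w_norm wG)"
proof
  assume H: "bounded_L2_approx (Linf_w wG) (Linf_w_norm wG)"
  define u where "u = (\<lambda>x. indicator G x :: real)"
  have Gl: "G \<in> lmeasurable" using lmeasurable_compact assms(1) by blast
  have Gs: "G \<in> sets lebesgue" using Gl by (simp add: fmeasurable_def)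
  have Gfin: "emeasure lebesgue G < \<infinity>" using Gl unfolding fmeasurable_def by blast
  have umeas: "u \<in> borel_measurable lebesgue" by (simp add: u_def Gs borel_measurable_indicator)
  have sq: "\<And>x. ennreal ((u x)\<^sup>2) = indicator G x" by (simp add: u_def indicator_def)
  have "(\<integral>\<^sup>+x. ennreal ((u x)\<^sup>2) \<partial>lebesgue) = emeasure lebesgue G"
    by (simp add: sq Gs)
  then have uL2: "u \<in> L2_space" using umeas Gfin by (simp add: L2_space_def)
  have fe: "(\<lambda>x. ereal \<bar>u x * wG x\<bar>) = (\<lambda>x. ereal (u x))"
    by (rule ext) (simp add: u_def assms(4) indicator_def)
  have unorm: "Linf_w_norm wG u \<le> 1"
  proof -
    have m: "(\<lambda>x. ereal (u x)) \<in> borel_measurable lebesgue" using umeas by simp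
    show ?thesis unfolding Linf_w_norm_def fe
      by (rule esssup_I[OF m]) (auto simp: u_def indicator_def)
  qed
  then have "u \<in> Linf_w wG" using umeas by (auto simp: Linf_w_def)
  with uL2 H obtain uj where C: "\<forall>j. uj j \<in> C0_infty"
    and L: "(\<lambda>j. L2_norm (\<lambda>x. u x - uj j x)) \<longlonglongrightarrow> 0"
    and LS: "limsup (\<lambda>j. Linf_w_norm wG (uj j)) \<le> Linf_w_norm wG u"
    unfolding bounded_L2_approx_def by blast
  have "limsup (\<lambda>j. Linf_w_norm wG (uj j)) < ereal (3/2)"
  proof -
    have "(1::ereal) < ereal (3/2)" by (simp add: one_ereal_def)
    with order.trans[OF LS unorm] show ?thesis by (rule le_less_trans)
  qed
  then have ev: "eventually (\<lambda>j. Linf_w_norm wG (uj j) < ereal (3/2)) sequentially"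
    by (rule Limsup_lessD)
  have mpos: "measure lebesgue G > 0"
    using assms(2) Gfin by (simp add: measure_def enn2real_positive_iff)
  define c where "c = sqrt (measure lebesgue G / 16)"
  have cpos: "c > 0" using mpos by (simp add: c_def)
  have "eventually (\<lambda>j. c \<le> L2_norm (\<lambda>x. u x - uj j x)) sequentially"
    using ev
  proof eventually_elim
    case (elim j)
    have cont: "continuous_on UNIV (uj j)"
      using C smooth_cont by (auto simp: C0_infty_def)
    have "AE x in lebesgue. ereal \<bar>uj j x * wG x\<bar> \<le> Linf_w_norm wG (uj j)"
      unfolding Linf_w_norm_def by (rule esssup_AE)
    then have AE1: "AE x in lebesgue. x \<in> -G \<longrightarrow> \<bar>uj j x\<bar> < 3/4"
    proof eventually_elim
      case (elim x)
      show ?case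
      proof
        assume "x \<in> -G"
        then have "wG x = 2" using assms(4) by simp
        have "ereal \<bar>uj j x * wG x\<bar> < ereal (3/2)" using elim \<open>Linf_w_norm wG (uj j) < ereal (3/2)\<close>
          by (rule le_less_trans)
        then show "\<bar>uj j x\<bar> < 3/4" using \<open>wG x = 2\<close> by (simp add: abs_mult)
      qed
    qed
    have opG: "open (-G)" using assms(1) compact_imp_closed by blast
    have b1: "-G \<subseteq> {x. \<bar>uj j x\<bar> \<le> 3/4}"
      using ae_open_bound[OF opG cont AE1] by blast
    have clo: "closed {x. \<bar>uj j x\<bar> \<le> 3/4}"
      using cont by (intro closed_Collect_le continuous_intros) auto
    have "closure (-G) = UNIV" using assms(3) by (simp add: closure_complement)
    then have b: "\<And>x. \<bar>uj j x\<bar> \<le> 3/4"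
      using closure_minimal[OF b1 clo] by blast
    define K where "K = closure {x. uj j x \<noteq> 0}"
    have Kc: "compact K" using C by (simp add: C0_infty_def K_def)
    have GKl: "G \<union> K \<in> lmeasurable" using Kc assms(1) by (intro lmeasurable_compact compact_Un)
    define I where "I = (\<integral>\<^sup>+x. ennreal ((u x - uj j x)\<^sup>2) \<partial>lebesgue)"
    have "(\<integral>\<^sup>+x. ennreal (1/16) * indicator G x \<partial>lebesgue) \<le> I"
      unfolding I_def
    proof (rule nn_integral_mono)
      fix x
      show "ennreal (1/16) * indicator G x \<le> ennreal ((u x - uj j x)\<^sup>2)"
      proof (cases "x \<in> G")
        case True
        have "1/4 \<le> 1 - uj j x" using b[of x] by simp
        then have "(1/4)\<^sup>2 \<le> (1 - uj j x)\<^sup>2" by (intro power_mono) auto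
        then show ?thesis using True by (simp add: u_def ennreal_leI power2_eq_square)
      qed simp
    qed
    then have low: "ennreal (1/16) * emeasure lebesgue G \<le> I"
      using Gs by (simp add: nn_integral_cmult_indicator)
    have "I \<le> (\<integral>\<^sup>+x. ennreal 4 * indicator (G \<union> K) x \<partial>lebesgue)"
      unfolding I_def
    proof (rule nn_integral_mono)
      fix x
      show "ennreal ((u x - uj j x)\<^sup>2) \<le> ennreal 4 * indicator (G \<union> K) x"
      proof (cases "x \<in> G \<union> K")
        case True
        have "\<bar>u x - uj j x\<bar> \<le> 2" using b[of x] by (cases "x \<in> G") (auto simp: u_def abs_le_iff)
        then have "\<bar>u x - uj j x\<bar>\<^sup>2 \<le> 2\<^sup>2" by (intro power_mono) auto
        then have "ennreal ((u x - uj j x)\<^sup>2) \<le> ennreal 4" by (intro ennreal_leI) simp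
        then show ?thesis using True by simp
      next
        case False
        then have "uj j x = 0" using closure_subset[of "{x. uj j x \<noteq> 0}"] by (auto simp: K_def)
        then show ?thesis using False by (simp add: u_def)
      qed
    qed
    also have "\<dots> = ennreal 4 * emeasure lebesgue (G \<union> K)"
      using GKl unfolding fmeasurable_def by (intro nn_integral_cmult_indicator) blast
    also have "\<dots> < \<infinity>"
    proof -
      have "emeasure lebesgue (G \<union> K) < \<infinity>" using GKl unfolding fmeasurable_def by blast
      then show ?thesis by (simp add: ennreal_mult_less_top del: emeasure_completion)
    qed
    finally have Ifin: "I < \<infinity>" .
    have "enn2real (ennreal (1/16) * emeasure lebesgue G) \<le> enn2real I"
      using low Ifin by (intro enn2real_mono) auto
    then have "measure lebesgue G / 16 \<le> enn2real I"
      by (simp add: enn2real_mult measure_def)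
    then show ?case unfolding c_def L2_norm_def I_def[symmetric] by simp
  qed
  then have "c \<le> 0" using L by (intro tendsto_lowerbound[OF L]) auto
  then show False using cpos by simp
qed

end
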